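(* A mixed graph $M_G$ has all its eigenvalues in $\{-1,1\}$ if and only if $M_G$ is switching equivalent to $tK_2$ (the disjoint union of $t$ undirected edges) for some positive integer $t$.
   Context: A mixed graph $M_G$ is obtained from a finite simple graph $G$ by orienting the edges of some subset of $E(G)$. With $\omega=\frac{1+\mathbf{i}\sqrt3}{2}$, $N(M_G)$ has $(u,v)$-entry $\omega$ if $\overrightarrow{uv}$ is an arc, $\bar\omega$ if $\overrightarrow{vu}$ is an arc, $1$ for an undirected edge, $0$ otherwise; the eigenvalues of $M_G$ are those of $N(M_G)$. $\mathbb{T}_6=\{1,-1,\omega,\bar\omega,-\omega,-\bar\omega\}$. Given a partition $V=\bigcup_{j\in\mathbb{T}_6}V_j$ into possibly empty sets, an edge or arc $xy$ has type $(j,k)$ if $x\in V_j,y\in V_k$ (arcs directed from $x$ to $y$); the partition is admissible if every undirected edge has type $(j,j)$ or $(j,\omega j)$ and every arc has type $(j,j)$, $(j,\bar\omega j)$ or $(j,-\omega j)$ for some $j$; a three-way switching replaces each undirected edge of type $(j,\omega j)$ by an arc from $V_j$ to $V_{\omega j}$, each arc of type $(j,\bar\omega j)$ by an undirected edge, and reverses each arc of type $(j,-\omega j)$. Two mixed graphs are switching equivalent if one is obtained from the other by a sequence of three-way switchings and reversals of all arcs (taking the converse). *)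

theory Defs
  imports "HOL-Analysis.Analysis"
begin

text \<open>A mixed graph on the (finite, nonempty) vertex type 'n is encoded by a set D of
ordered pairs: an undirected edge uv is present iff both (u,v) and (v,u) are in D,
an arc from u to v is present iff (u,v) is in D but (v,u) is not.\<close>

definition mixed_graph :: "('n \<times> 'n) set \<Rightarrow> bool" where
  "mixed_graph D \<longleftrightarrow> (\<forall>x. (x, x) \<notin> D)"

definition und_edge :: "('n \<times> 'n) set \<Rightarrow> 'n \<Rightarrow> 'n \<Rightarrow> bool" where
  "und_edge D u v \<longleftrightarrow> (u, v) \<in> D \<and> (v, u) \<in> D"

definition arc :: "('n \<times> 'n) set \<Rightarrow> 'n \<Rightarrow> 'n \<Rightarrow> bool" where
  "arc D u v \<longleftrightarrow> (u, v) \<in> D \<and> (v, u) \<notin> D"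

definition omega :: complex where
  "omega = (1 + \<i> * complex_of_real (sqrt 3)) / 2"

definition T6 :: "complex set" where
  "T6 = {1, -1, omega, cnj omega, - omega, - cnj omega}"

definition Nmat :: "('n::finite \<times> 'n) set \<Rightarrow> complex ^ 'n ^ 'n" where
  "Nmat D = (\<chi> u v. if und_edge D u v then 1
                     else if arc D u v then omega
                     else if arc D v u then cnj omega
                     else 0)"

definition is_eigenvalue :: "complex ^ 'n ^ 'n \<Rightarrow> complex \<Rightarrow> bool" where
  "is_eigenvalue A c \<longleftrightarrow> (\<exists>x. x \<noteq> 0 \<and> A *v x = c *s x)"

text \<open>A partition V = union of V_j (j in T6) is encoded by f with f x = j iff x in V_j.\<close>
definition admissible :: "('n \<times> 'n) set \<Rightarrow> ('n \<Rightarrow> complex) \<Rightarrow> bool" where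
  "admissible D f \<longleftrightarrow> (\<forall>x. f x \<in> T6) \<and>
     (\<forall>x y. und_edge D x y \<longrightarrow> f y = f x \<or> f y = omega * f x \<or> f x = omega * f y) \<and>
     (\<forall>x y. arc D x y \<longrightarrow> f y = f x \<or> f y = cnj omega * f x \<or> f y = - omega * f x)"

definition three_way_switch :: "('n \<times> 'n) set \<Rightarrow> ('n \<Rightarrow> complex) \<Rightarrow> ('n \<times> 'n) set" where
  "three_way_switch D f = {(u, v).
      (und_edge D u v \<and> (f v = f u \<or> f v = omega * f u)) \<or>
      (arc D u v \<and> (f v = f u \<or> f v = cnj omega * f u)) \<or>
      (arc D v u \<and> (f u = cnj omega * f v \<or> f u = - omega * f v))}"

definition switch_step :: "('n \<times> 'n) set \<Rightarrow> ('n \<times> 'n) set \<Rightarrow> bool" where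
  "switch_step D D' \<longleftrightarrow> (\<exists>f. admissible D f \<and> D' = three_way_switch D f) \<or> D' = converse D"

definition switching_equivalent :: "('n \<times> 'n) set \<Rightarrow> ('n \<times> 'n) set \<Rightarrow> bool" where
  "switching_equivalent D D' \<longleftrightarrow> (\<lambda>A B. switch_step A B \<or> switch_step B A)\<^sup>*\<^sup>* D D'"

text \<open>The mixed graph D (on the whole vertex type) is t K_2: t disjoint undirected edges
covering all vertices (a perfect matching of undirected edges, no arcs).\<close>
definition is_tK2 :: "nat \<Rightarrow> ('n::finite \<times> 'n) set \<Rightarrow> bool" where
  "is_tK2 t D \<longleftrightarrow> mixed_graph D \<and> sym D \<and> (\<forall>x. \<exists>!y. (x, y) \<in> D) \<and> CARD('n) = 2 * t"

end

theory Submission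
  imports Defs "HOL-Computational_Algebra.Fundamental_Theorem_Algebra"
begin

definition itv :: "complex^'n^'n \<Rightarrow> nat \<Rightarrow> complex^'n \<Rightarrow> complex^'n" where
  "itv A k v = ((\<lambda>w. A *v w) ^^ k) v"

definition pe :: "complex^'n^'n \<Rightarrow> complex poly \<Rightarrow> complex^'n \<Rightarrow> complex^'n" where
  "pe A p v = (\<Sum>k\<le>degree p. coeff p k *s itv A k v)"

lemma itv_0[simp]: "itv A 0 v = v" by (simp add: itv_def)
lemma itv_Suc: "itv A (Suc k) v = A *v itv A k v" by (simp add: itv_def)

lemma itv_add: "itv A k (u + w) = itv A k u + itv A k w"
  by (induct k) (simp_all add: itv_Suc matrix_vector_right_distrib)
lemma itv_scale: "itv A k (c *s u) = c *s itv A k u"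
  by (induct k) (simp_all add: itv_Suc vec.scale)
lemma itv_zero[simp]: "itv A k 0 = 0"
  by (induct k) (simp_all add: itv_Suc)

lemma pe_bound:
  assumes "degree p < m"
  shows "pe A p v = (\<Sum>k<m. coeff p k *s itv A k v)"
proof -
  have "(\<Sum>k<m. coeff p k *s itv A k v) = (\<Sum>k\<le>degree p. coeff p k *s itv A k v)"
    using assms by (intro sum.mono_neutral_right) (auto simp: coeff_eq_0)
  then show ?thesis by (simp add: pe_def)
qed

lemma pe_add: "pe A (p + q) v = pe A p v + pe A q v"
proof -
  define m where "m = Suc (max (degree p) (degree q))"
  have "degree (p+q) < m" using degree_add_le_max[of p q] by (simp add: m_def)
  then show ?thesis
    by (simp add: pe_bound[of _ m] m_def sum.distrib vec.scale_left_distrib)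
qed

lemma pe_smult: "pe A (smult c p) v = c *s pe A p v"
proof -
  have "degree (smult c p) < Suc (degree p)" by (simp add: le_imp_less_Suc)
  then show ?thesis
    by (simp add: pe_bound[of _ "Suc (degree p)"] vec.scale_sum_right)
qed

lemma pe_vadd: "pe A p (u + w) = pe A p u + pe A p w"
  by (simp add: pe_def itv_add sum.distrib vec.scale_right_distrib)

lemma pe_vscale: "pe A p (c *s u) = c *s pe A p u"
  by (simp add: pe_def itv_scale vec.scale_sum_right mult.commute)

lemma pe_zero_poly[simp]: "pe A 0 v = 0" by (simp add: pe_def)

lemma pe_pCons: "pe A (pCons a p) v = a *s v + A *v pe A p v"
proof -
  define m where "m = Suc (degree p)"
  have d: "degree (pCons a p) < Suc m" using degree_pCons_le[of a p] by (simp add: m_def)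
  have "pe A (pCons a p) v = (\<Sum>k<Suc m. coeff (pCons a p) k *s itv A k v)"
    by (rule pe_bound[OF d])
  also have "\<dots> = a *s v + (\<Sum>k<m. coeff p k *s itv A (Suc k) v)"
    by (subst sum.lessThan_Suc_shift) simp
  also have "(\<Sum>k<m. coeff p k *s itv A (Suc k) v) = A *v (\<Sum>k<m. coeff p k *s itv A k v)"
    by (simp add: itv_Suc vec.sum vec.scale)
  also have "(\<Sum>k<m. coeff p k *s itv A k v) = pe A p v"
    by (rule pe_bound[symmetric]) (simp add: m_def)
  finally show ?thesis .
qed

lemma pe_mult: "pe A (p * q) v = pe A p (pe A q v)"
proof (induct p)
  case 0
  then show ?case by simp
next
  case (pCons a p)
  have "pe A (pCons a p * q) v = a *s pe A q v + pe A (pCons 0 (p * q)) v"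
    by (simp add: pe_add pe_smult)
  also have "pe A (pCons 0 (p * q)) v = A *v pe A p (pe A q v)"
    by (simp add: pe_pCons pCons)
  finally show ?case by (simp add: pe_pCons)
qed

lemma pe_lin: "pe A [:-a, 1:] v = A *v v - a *s v"
proof -
  have "pe A [:-a, 1:] v = (-a) *s v + A *v v" by (simp add: pe_pCons)
  then show ?thesis by (metis add.commute diff_conv_add_uminus vec.scale_minus_left)
qed

lemma pe_monom: "pe A (monom c k) v = c *s itv A k v"
proof -
  have "pe A (monom c k) v = (\<Sum>j<Suc k. coeff (monom c k) j *s itv A j v)"
    by (rule pe_bound) (simp add: degree_monom_le le_imp_less_Suc)
  also have "\<dots> = (\<Sum>j<Suc k. (if j = k then c *s itv A k v else 0))"
    by (intro sum.cong) (auto simp: coeff_monom)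
  finally show ?thesis by simp
qed

lemma pe_sum: "finite I \<Longrightarrow> pe A (\<Sum>i\<in>I. f i) v = (\<Sum>i\<in>I. pe A (f i) v)"
  by (induct I rule: finite_induct) (simp_all add: pe_add)


lemma eig_from_poly:
  fixes A :: "complex^'n^'n"
  assumes S_diff: "\<And>x y. x \<in> S \<Longrightarrow> y \<in> S \<Longrightarrow> x - y \<in> S"
    and S_scale: "\<And>c x. x \<in> S \<Longrightarrow> c *s x \<in> S"
    and S_A: "\<And>x. x \<in> S \<Longrightarrow> A *v x \<in> S"
  shows "p \<noteq> 0 \<Longrightarrow> v \<in> S \<Longrightarrow> v \<noteq> 0 \<Longrightarrow> pe A p v = 0 \<Longrightarrow> \<exists>y\<in>S. y \<noteq> 0 \<and> (\<exists>c. A *v y = c *s y)"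
proof (induct "degree p" arbitrary: p v rule: less_induct)
  case less
  show ?case
  proof (cases "degree p = 0")
    case True
    then obtain c where p: "p = [:c:]" by (metis degree_eq_zeroE)
    with less have "c \<noteq> 0" by auto
    have "pe A p v = c *s v" using p by (simp add: pe_pCons)
    with less \<open>c \<noteq> 0\<close> show ?thesis by (simp add: vec.scale_eq_0_iff)
  next
    case False
    have "\<not> (\<exists>a l. a \<noteq> 0 \<and> l = 0 \<and> p = pCons a l)" using False by auto
    then obtain a where "poly p a = 0" using fundamental_theorem_of_algebra_alt by blast
    then obtain q where pq: "p = [:-a,1:] * q" using poly_eq_0_iff_dvd by (metis dvdE)
    have q0: "q \<noteq> 0" using pq less by auto
    have "degree p = degree [:-a,1:] + degree q" unfolding pq by (rule degree_mult_eq) (use q0 in auto)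
    then have "degree p = Suc (degree q)" by simp
    then have dq: "degree q < degree p" by simp
    define w where "w = A *v v - a *s v"
    have pq': "p = q * [:-a,1:]" using pq by (metis mult.commute)
    have "pe A p v = pe A q w" unfolding w_def pq' pe_mult pe_lin ..
    show ?thesis
    proof (cases "w = 0")
      case True
      then have "A *v v = a *s v" by (simp add: w_def)
      then show ?thesis using less by blast
    next
      case False
      have "w \<in> S" unfolding w_def using less by (intro S_diff S_A S_scale)
      then show ?thesis using less(1)[OF dq q0 _ False] less \<open>pe A p v = pe A q w\<close> by auto
    qed
  qed
qed

lemma krylov:
  fixes A :: "complex^'n^'n"
  shows "\<exists>p. p \<noteq> 0 \<and> pe A p v = 0"
proof -
  define n where "n = CARD('n)"
  define f where "f k = itv A k v" for k
  show ?thesis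
  proof (cases "inj_on f {..n}")
    case False
    then obtain i j where ij: "i \<noteq> j" "f i = f j" by (auto simp: inj_on_def)
    define p where "p = monom (1::complex) i + monom (-1) j"
    have "coeff p i = 1" using ij by (simp add: p_def coeff_monom)
    then have "p \<noteq> 0" by auto
    moreover have "pe A p v = 0" using ij
      by (simp add: p_def pe_add pe_monom f_def vec.scale_minus_left)
    ultimately show ?thesis by blast
  next
    case True
    define V where "V = f ` {..n}"
    have fin: "finite V" by (simp add: V_def)
    have cV: "card V = Suc n" using True by (simp add: V_def card_image)
    have "vec.dim V \<le> n"
      using vec.dim_subset_UNIV[of V] by (simp add: n_def card_cart_basis vec.dimension_def)
    then have "vec.dependent V" using cV by (intro vec.dependent_biggerset_general) auto
    then obtain u where u: "\<exists>w\<in>V. u w \<noteq> 0" "(\<Sum>w\<in>V. u w *s w) = 0"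
      using vec.dependent_finite[OF fin] by blast
    define p where "p = (\<Sum>k\<le>n. monom (u (f k)) k)"
    have cp: "coeff p k = (if k \<le> n then u (f k) else 0)" for k
      by (simp add: p_def coeff_sum coeff_monom)
    have "p \<noteq> 0"
    proof
      assume "p = 0"
      from u(1) obtain k where "k \<le> n" "u (f k) \<noteq> 0" by (auto simp: V_def)
      with cp[of k] \<open>p = 0\<close> show False by simp
    qed
    moreover have "pe A p v = 0"
    proof -
      have "pe A p v = (\<Sum>k\<le>n. u (f k) *s f k)"
        by (simp add: p_def pe_sum pe_monom f_def)
      also have "\<dots> = (\<Sum>w\<in>V. u w *s w)"
        unfolding V_def by (subst sum.reindex[OF True]) simp
      finally show ?thesis using u(2) by simp
    qed
    ultimately show ?thesis by blast
  qed
qed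

definition cinner :: "complex^'n \<Rightarrow> complex^'n \<Rightarrow> complex" where
  "cinner x y = (\<Sum>i\<in>UNIV. cnj (x$i) * y$i)"

lemma cinner_herm:
  fixes N :: "complex^'n^'n"
  assumes herm: "\<And>i j. N$i$j = cnj (N$j$i)"
  shows "cinner (N *v x) y = cinner x (N *v y)"
proof -
  have h': "cnj (N$i$j) = N$j$i" for i j using herm[of j i] by simp
  have "cinner (N *v x) y = (\<Sum>i\<in>UNIV. \<Sum>j\<in>UNIV. cnj (N$i$j) * cnj (x$j) * y$i)"
    by (simp add: cinner_def matrix_vector_mult_def sum_distrib_right)
  also have "\<dots> = (\<Sum>j\<in>UNIV. \<Sum>i\<in>UNIV. cnj (x$j) * (N$j$i * y$i))"
    by (subst sum.swap) (simp add: h' mult.commute mult.left_commute)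
  also have "\<dots> = cinner x (N *v y)"
    by (simp add: cinner_def matrix_vector_mult_def sum_distrib_left)
  finally show ?thesis .
qed

lemma cinner_diff: "cinner x (y - z) = cinner x y - cinner x z"
  by (simp add: cinner_def algebra_simps sum_subtractf)
lemma cinner_diff1: "cinner (y - z) x = cinner y x - cinner z x"
  by (simp add: cinner_def algebra_simps sum_subtractf)

lemma cinner_self_0: "cinner x x = 0 \<Longrightarrow> x = 0"
proof -
  assume h: "cinner x x = 0"
  have e: "cnj (x$i) * x$i = complex_of_real ((cmod (x$i))^2)" for i
    by (subst complex_norm_square) (rule mult.commute)
  have "cinner x x = complex_of_real (\<Sum>i\<in>UNIV. (cmod (x$i))^2)"
    unfolding cinner_def e of_real_sum ..
  with h have "(\<Sum>i\<in>UNIV. (cmod (x$i))^2) = 0" by (metis of_real_eq_0_iff)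
  then have "\<forall>i\<in>UNIV. (cmod (x$i))^2 = 0" by (subst (asm) sum_nonneg_eq_0_iff) auto
  then show "x = 0" by (simp add: vec_eq_iff)
qed

lemma sq_id:
  fixes N :: "complex^'n^'n"
  assumes herm: "\<And>i j. N$i$j = cnj (N$j$i)"
  and ev: "\<And>c x. x \<noteq> 0 \<Longrightarrow> N *v x = c *s x \<Longrightarrow> c = 1 \<or> c = -1"
  shows "N *v (N *v x) = x"
proof (rule ccontr)
  define Bf where "Bf z = N *v (N *v z) - z" for z
  assume "N *v (N *v x) \<noteq> x"
  then have Bx: "Bf x \<noteq> 0" by (simp add: Bf_def)
  define S where "S = range Bf"
  have Bdiff: "Bf (a - b) = Bf a - Bf b" for a b
    by (simp add: Bf_def matrix_vector_right_distrib vec.diff)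
  have Bscale: "Bf (c *s a) = c *s Bf a" for c a
    by (simp add: Bf_def vec.scale vec.scale_right_diff_distrib)
  have BN: "N *v Bf a = Bf (N *v a)" for a
    by (simp add: Bf_def vec.diff)
  have S1: "x - y \<in> S" if "x \<in> S" "y \<in> S" for x y
  proof -
    from that obtain a b where "x = Bf a" "y = Bf b" by (auto simp: S_def)
    then have "x - y = Bf (a - b)" by (simp add: Bdiff)
    then show ?thesis by (simp add: S_def)
  qed
  have S2: "c *s x \<in> S" if "x \<in> S" for c x
  proof -
    from that obtain a where "x = Bf a" by (auto simp: S_def)
    then have "c *s x = Bf (c *s a)" by (simp add: Bscale)
    then show ?thesis by (simp add: S_def)
  qed
  have S3: "N *v x \<in> S" if "x \<in> S" for x
  proof -
    from that obtain a where "x = Bf a" by (auto simp: S_def)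
    then have "N *v x = Bf (N *v a)" by (simp add: BN)
    then show ?thesis by (simp add: S_def)
  qed
  obtain p where p: "p \<noteq> 0" "pe N p (Bf x) = 0" using krylov by blast
  obtain y c where y: "y \<in> S" "y \<noteq> 0" "N *v y = c *s y"
    using eig_from_poly[where S=S and A=N and p=p and v="Bf x", OF S1 S2 S3 p(1) _ Bx p(2)] by (auto simp: S_def)
  then obtain w where w: "y = Bf w" by (auto simp: S_def)
  have "c = 1 \<or> c = -1" using ev y by blast
  then have "c * c = 1" by auto
  have "Bf y = 0" using y(3) \<open>c * c = 1\<close> by (simp add: Bf_def vec.scale)
  have Bh: "cinner (Bf a) b = cinner a (Bf b)" for a b
    by (simp add: Bf_def cinner_diff cinner_diff1 cinner_herm[OF herm])
  have "cinner y y = cinner w (Bf y)" using w Bh by simp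
  also have "\<dots> = 0" using \<open>Bf y = 0\<close> by (simp add: cinner_def)
  finally show False using cinner_self_0 y(2) by blast
qed


definition adj :: "('n \<times> 'n) set \<Rightarrow> 'n \<Rightarrow> 'n \<Rightarrow> bool" where
  "adj D u v \<longleftrightarrow> (u, v) \<in> D \<or> (v, u) \<in> D"

lemma omega_cnj: "omega * cnj omega = 1"
proof -
  have o: "omega = Complex (1/2) (sqrt 3 / 2)" by (simp add: omega_def complex_eq_iff)
  have "sqrt 3 * sqrt 3 = (3::real)" by simp
  then show ?thesis unfolding o by (simp add: complex_eq_iff field_simps)
qed

lemma omega_nz: "omega \<noteq> 0" using omega_cnj by auto

lemma N_herm: "Nmat D $ i $ j = cnj (Nmat D $ j $ i)"
  by (auto simp: Nmat_def und_edge_def arc_def)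

lemma N_nz: "Nmat D $ u $ v \<noteq> 0 \<longleftrightarrow> adj D u v"
  by (auto simp: Nmat_def und_edge_def arc_def adj_def omega_nz)

lemma N_prod: "Nmat D $ u $ v * Nmat D $ v $ u = (if adj D u v then 1 else 0)"
  using omega_cnj by (auto simp: Nmat_def und_edge_def arc_def adj_def mult.commute)

lemma sum_single: "(\<And>v. v \<noteq> a \<Longrightarrow> f v = 0) \<Longrightarrow> (\<Sum>v\<in>(UNIV::'n::finite set). f v) = f a"
proof -
  assume h: "\<And>v. v \<noteq> a \<Longrightarrow> f v = 0"
  have "(\<Sum>v\<in>(UNIV::'n set). f v) = (\<Sum>v\<in>{a}. f v)"
    by (rule sum.mono_neutral_right) (auto simp: h)
  then show ?thesis by simp
qed

lemma N_axis: "(Nmat D *v axis u 1) $ v = Nmat D $ v $ u"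
proof -
  have "(Nmat D *v axis u 1) $ v = (\<Sum>w\<in>UNIV. Nmat D $ v $ w * axis u 1 $ w)"
    by (simp add: matrix_vector_mult_def)
  also have "\<dots> = Nmat D $ v $ u * axis u 1 $ u"
    by (rule sum_single) (simp add: axis_def)
  finally show ?thesis by (simp add: axis_def)
qed

lemma ev_imp_matching:
  fixes D :: "('n::finite \<times> 'n) set"
  assumes "\<And>c. is_eigenvalue (Nmat D) c \<Longrightarrow> c \<in> {-1, 1}"
  shows "\<exists>!v. adj D u v"
proof -
  have id: "Nmat D *v (Nmat D *v x) = x" for x
    by (rule sq_id[OF N_herm]) (use assms in \<open>auto simp: is_eigenvalue_def\<close>)
  have mv: "(Nmat D *v y) $ u = (\<Sum>v\<in>UNIV. Nmat D $ u $ v * y $ v)" for y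
    by (simp add: matrix_vector_mult_def)
  have "(Nmat D *v (Nmat D *v axis u 1)) $ u = (\<Sum>v\<in>UNIV. Nmat D $ u $ v * Nmat D $ v $ u)"
    by (simp only: mv N_axis)
  also have "\<dots> = (\<Sum>v\<in>UNIV. if adj D u v then 1 else 0)" by (simp add: N_prod)
  also have "\<dots> = of_nat (card {v. adj D u v})"
    by (simp add: sum.If_cases)
  finally have "of_nat (card {v. adj D u v}) = (1::complex)"
    using id[of "axis u 1"] by (simp add: axis_def)
  then have "card {v. adj D u v} = 1" by (metis of_nat_eq_1_iff)
  then obtain v where "{v. adj D u v} = {v}" by (meson card_1_singletonE)
  then show ?thesis by (metis mem_Collect_eq singletonD singletonI)
qed

lemma matching_imp_ev:
  fixes D :: "('n::finite \<times> 'n) set"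
  assumes m: "\<And>u. \<exists>!v. adj D u v"
  shows "is_eigenvalue (Nmat D) c \<Longrightarrow> c \<in> {-1, 1}"
proof -
  let ?N = "Nmat D"
  have sym: "adj D u v \<Longrightarrow> adj D v u" for u v by (auto simp: adj_def)
  have id: "?N *v (?N *v x) = x" for x
  proof -
    have "(?N *v (?N *v x)) $ u = x $ u" for u
    proof -
      obtain p where p: "adj D u p" using m by blast
      have pu: "adj D u v \<Longrightarrow> v = p" for v using m p by blast
      have up: "adj D p w \<Longrightarrow> w = u" for w using m sym[OF p] by blast
      have "(?N *v (?N *v x)) $ u = (\<Sum>v\<in>UNIV. ?N $ u $ v * (?N *v x) $ v)"
        by (simp add: matrix_vector_mult_def)
      also have "\<dots> = ?N $ u $ p * (?N *v x) $ p"
        by (rule sum_single) (metis N_nz pu mult_zero_left)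
      also have "(?N *v x) $ p = (\<Sum>w\<in>UNIV. ?N $ p $ w * x $ w)"
        by (simp add: matrix_vector_mult_def)
      also have "\<dots> = ?N $ p $ u * x $ u"
        by (rule sum_single) (metis N_nz up mult_zero_left)
      finally show ?thesis using N_prod[of D u p] p by (simp add: mult.assoc[symmetric])
    qed
    then show ?thesis by (simp add: vec_eq_iff)
  qed
  assume "is_eigenvalue ?N c"
  then obtain x where x: "x \<noteq> 0" "?N *v x = c *s x" by (auto simp: is_eigenvalue_def)
  have "x = ?N *v (?N *v x)" by (simp add: id)
  also have "\<dots> = (c * c) *s x" using x by (simp add: vec.scale)
  finally have e: "(c * c) *s x = x" by simp
  have "(c * c - 1) *s x = (c * c) *s x - 1 *s x" by (rule vec.scale_left_diff_distrib)
  then have "(c * c - 1) *s x = 0" using e by simp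
  then have "c * c - 1 = 0" using x(1) by (meson vec.scale_eq_0_iff)
  then have "c * c = 1" by simp
  then show "c \<in> {-1, 1}" by (auto simp: square_eq_1_iff)
qed

lemma switch_adj:
  assumes "switch_step A B"
  shows "adj B = adj A"
proof -
  { fix f assume adm: "admissible A f" and B: "B = three_way_switch A f"
    have "adj B u v \<longleftrightarrow> adj A u v" for u v
    proof
      assume "adj B u v" then show "adj A u v"
        unfolding B three_way_switch_def adj_def und_edge_def arc_def by auto
    next
      assume a: "adj A u v"
      have c: "(x, y) \<in> A \<Longrightarrow> (x, y) \<in> B \<or> (y, x) \<in> B" for x y
      proof -
        assume xy: "(x, y) \<in> A"
        show ?thesis
        proof (cases "(y, x) \<in> A")
          case True
          then have "und_edge A x y" "und_edge A y x" using xy by (auto simp: und_edge_def)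
          moreover have "f y = f x \<or> f y = omega * f x \<or> f x = omega * f y"
            using adm \<open>und_edge A x y\<close> by (auto simp: admissible_def)
          ultimately show ?thesis unfolding B three_way_switch_def by auto
        next
          case False
          then have ar: "arc A x y" using xy by (auto simp: arc_def)
          moreover have "f y = f x \<or> f y = cnj omega * f x \<or> f y = - omega * f x"
            using adm ar by (auto simp: admissible_def)
          ultimately show ?thesis unfolding B three_way_switch_def by auto
        qed
      qed
      from a show "adj B u v" unfolding adj_def using c by blast
    qed
    then have ?thesis by auto }
  moreover have "B = converse A \<Longrightarrow> ?thesis" by (auto simp: adj_def fun_eq_iff)
  ultimately show ?thesis using assms unfolding switch_step_def by blast
qed

lemma equiv_adj:
  assumes "switching_equivalent D H"
  shows "adj D = adj H"
  using assms unfolding switching_equivalent_def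
proof (induct rule: rtranclp_induct)
  case base then show ?case by simp
next
  case (step y z) then show ?case using switch_adj by metis
qed

lemma even_inv:
  assumes "finite A" "\<forall>x\<in>A. g x \<in> A \<and> g x \<noteq> x \<and> g (g x) = x"
  shows "even (card A)"
  using assms
proof (induct "card A" arbitrary: A rule: less_induct)
  case less
  show ?case
  proof (cases "A = {}")
    case True then show ?thesis by simp
  next
    case False
    then obtain x where x: "x \<in> A" by blast
    define A' where "A' = A - {x, g x}"
    have gx: "g x \<in> A" "g x \<noteq> x" using less x by auto
    have cA: "card A = Suc (Suc (card A'))"
    proof -
      have "card A' = card A - card {x, g x}" unfolding A'_def
        using less x gx by (intro card_Diff_subset) auto
      moreover have "card {x, g x} = 2" using gx by simp
      moreover have "card A \<ge> 2" using less(2) x gx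
        by (metis \<open>card {x, g x} = 2\<close> card_mono empty_subsetI insert_subset)
      ultimately show ?thesis by simp
    qed
    have "\<forall>y\<in>A'. g y \<in> A' \<and> g y \<noteq> y \<and> g (g y) = y"
      using less(3) x unfolding A'_def by (metis Diff_iff insert_iff singletonD)
    then have "even (card A')" using less cA unfolding A'_def by (intro less(1)) auto
    then show ?thesis using cA by simp
  qed
qed


theorem theorem6p1:
  fixes D :: "('n::finite \<times> 'n) set"
  assumes "mixed_graph D"
  shows "(\<forall>c. is_eigenvalue (Nmat D) c \<longrightarrow> c \<in> {-1, 1}) \<longleftrightarrow>
         (\<exists>t::nat. t > 0 \<and> (\<exists>H. is_tK2 t H \<and> switching_equivalent D H))"
proof
  assume ev: "\<forall>c. is_eigenvalue (Nmat D) c \<longrightarrow> c \<in> {-1, 1}"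
  have m: "\<exists>!v. adj D u v" for u using ev_imp_matching ev by blast
  define pt where "pt u = (THE v. adj D u v)" for u
  have pt1: "adj D u (pt u)" for u unfolding pt_def using theI'[OF m] .
  have pt2: "adj D u v \<Longrightarrow> v = pt u" for u v unfolding pt_def using m by (metis the1_equality)
  have adjs: "adj D u v \<Longrightarrow> adj D v u" for u v by (auto simp: adj_def)
  have irr: "\<not> adj D u u" for u using assms by (auto simp: adj_def mixed_graph_def)
  have ptpt: "pt (pt u) = u" for u using pt1 pt2 adjs by metis
  have ptn: "pt u \<noteq> u" for u using pt1 irr by metis
  define f where "f u = (if arc D (pt u) u then cnj omega else 1)" for u
  have fu: "(u, v) \<in> D \<Longrightarrow> (v, u) \<in> D \<Longrightarrow> f u = 1 \<and> f v = 1" for u v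
  proof -
    assume uv: "(u, v) \<in> D" "(v, u) \<in> D"
    then have "pt u = v" "pt v = u" using pt2 adjs by (auto simp: adj_def)
    then show ?thesis using uv by (auto simp: f_def arc_def)
  qed
  have fa: "arc D u v \<Longrightarrow> f u = 1 \<and> f v = cnj omega" for u v
  proof -
    assume uv: "arc D u v"
    then have "pt u = v" "pt v = u" using pt2 adjs by (auto simp: adj_def arc_def)
    then show ?thesis using uv by (auto simp: f_def arc_def)
  qed
  have adm: "admissible D f"
    unfolding admissible_def
  proof (intro conjI allI impI)
    show "f x \<in> T6" for x by (simp add: f_def T6_def)
    show "f y = f x \<or> f y = omega * f x \<or> f x = omega * f y" if "und_edge D x y" for x y
      using fu that by (auto simp: und_edge_def)
    show "f y = f x \<or> f y = cnj omega * f x \<or> f y = - omega * f x" if "arc D x y" for x y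
      using fa that by auto
  qed
  define H where "H = three_way_switch D f"
  have Hadj: "(u, v) \<in> H \<longleftrightarrow> adj D u v" for u v
  proof
    assume "(u, v) \<in> H" then show "adj D u v"
      unfolding H_def three_way_switch_def adj_def und_edge_def arc_def by auto
  next
    assume a: "adj D u v"
    show "(u, v) \<in> H"
    proof (cases "(u, v) \<in> D \<and> (v, u) \<in> D")
      case True
      then show ?thesis using fu[of u v] by (auto simp: H_def three_way_switch_def und_edge_def)
    next
      case False
      then have "arc D u v \<or> arc D v u" using a by (auto simp: adj_def arc_def)
      then show ?thesis
      proof
        assume "arc D u v" then show ?thesis using fa[of u v] by (auto simp: H_def three_way_switch_def)
      next
        assume "arc D v u" then show ?thesis using fa[of v u] by (auto simp: H_def three_way_switch_def)
      qed
    qed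
  qed
  define t where "t = CARD('n) div 2"
  have ev2: "even (CARD('n))"
    by (rule even_inv[where g = pt]) (auto simp: ptn ptpt)
  have "CARD('n) > 0" by simp
  then have t0: "t > 0" using ev2 unfolding t_def by (metis dvd_div_mult_self gr0I mult_0)
  have "is_tK2 t H"
    unfolding is_tK2_def
  proof (intro conjI)
    show "mixed_graph H" using Hadj irr by (auto simp: mixed_graph_def)
    show "sym H" using Hadj adjs by (auto simp: sym_def)
    show "\<forall>x. \<exists>!y. (x, y) \<in> H" using Hadj m by auto
    show "CARD('n) = 2 * t" using ev2 by (simp add: t_def)
  qed
  moreover have "switching_equivalent D H"
    unfolding switching_equivalent_def
    by (rule r_into_rtranclp) (use adm in \<open>auto simp: switch_step_def H_def\<close>)
  ultimately show "\<exists>t::nat. t > 0 \<and> (\<exists>H. is_tK2 t H \<and> switching_equivalent D H)"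
    using t0 by blast
next
  assume "\<exists>t::nat. t > 0 \<and> (\<exists>H. is_tK2 t H \<and> switching_equivalent D H)"
  then obtain t H where H: "is_tK2 t H" "switching_equivalent D H" by blast
  have aH: "adj D = adj H" using equiv_adj[OF H(2)] .
  have "adj H u v \<longleftrightarrow> (u, v) \<in> H" for u v
    using H(1) by (auto simp: is_tK2_def adj_def sym_def)
  then have "\<exists>!v. adj D u v" for u using H(1) aH by (auto simp: is_tK2_def)
  then show "\<forall>c. is_eigenvalue (Nmat D) c \<longrightarrow> c \<in> {-1, 1}"
    using matching_imp_ev by blast
qed

end
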